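(* In the entry–exit model described in the context (under all its standing assumptions (A1)–(A8)), define the operator $(\Gamma u)(\phi,p):=\int u(\phi',p)\,\Gamma(\phi,\mathrm d\phi')$. Then $\Gamma$ maps $\mathscr C$ into $\mathscr C$, and $\Gamma\kappa\le\kappa/\delta$ pointwise on $\mathbb R_+^2$.
   Context: Let $\mathbb R_+=[0,\infty)$ and let $\mathscr B$ denote its Borel sets; integrals are over $\mathbb R_+$. "Increasing" for functions on $\mathbb R_+^2$ refers to the componentwise order. Standing assumptions: (A1) A demand function $D$ on $\mathbb R_+$ is continuous and strictly decreasing with $D(0)=\infty$ and $\lim_{p\to\infty}D(p)=0$. (A2) Profit $\pi(\phi,p)$ and output $q(\phi,p)$ are functions of productivity $\phi\ge 0$ and price $p\ge0$; both are continuous and strictly increasing on $\mathbb R_+^2$; $q\ge 0$; and $\pi(\phi,p)<0$ if $\phi=0$ or $p=0$. (A3) $\Gamma$ is a Markov transition kernel on $\mathbb R_+$ which is monotone increasing (i.e. $\phi\mapsto\Gamma(\phi,[0,a])$ is decreasing for every $a\ge0$); $\Gamma^n$ denotes its $n$-step kernel. Moreover (a) for each $a>0$ and $\phi\ge0$ there is $n\in\mathbb N$ with $\Gamma^n(\phi,[0,a))>0$; (b) for each $p>0$ there exists $\phi\ge0$ with $\int \pi(\phi',p)\Gamma(\phi,\mathrm d\phi')\ge 0$. $\beta=1/(1+r)$ for a fixed $r>0$. (A4) $\gamma$ is a Borel probability measure on $\mathbb R_+$ with $\int q(\phi,p)\gamma(\mathrm d\phi)<\infty$ for all $p$ and $\gamma([0,a])>0$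 for all $a>0$; $c_e>0$ is a fixed entry cost. (A5) There exists $p>0$ with $\int \pi(\phi,p)\gamma(\mathrm d\phi)\ge c_e$. (A6) For every $p$, $\sum_{t\ge0}\beta^t\int \pi(\phi',p)\Gamma^t(0,\mathrm d\phi')\le 0$. (A7) Let $\{\phi_t\}$ be the process with $\phi_0\sim\gamma$ and $\phi_{t+1}\sim\Gamma(\phi_t,\cdot)$. There is $\delta\in(\beta,1)$ with $\sum_{t\ge0}\delta^t\,\mathbb E\,\pi(\phi_t,p)<\infty$ for all $p\ge0$. Fix a constant $b$ with $\pi+b\ge1$ and set $\kappa(\phi,p):=\sum_{t\ge0}\delta^t\mathbb E_\phi[\pi(\phi_t,p)+b]$, where under $\mathbb E_\phi$ the process starts at $\phi_0=\phi$ and evolves via $\Gamma$; $\kappa$ is assumed finite everywhere. For $f$ on $\mathbb R_+^2$ let $\|f\|_\kappa:=\sup|f/\kappa|$. Let $\mathscr C$ be the set of continuous, increasing functions $f$ on $\mathbb R_+^2$ with $\|f\|_\kappa<\infty$. (A8) For every $u\in\mathscr C$, the map $(\phi,p)\mapsto\int u(\phi',p)\Gamma(\phi,\mathrm d\phi')$ is continuous. *)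

theory Defs
  imports "HOL-Probability.Probability"
begin

definition Rplus :: "real measure" where
  "Rplus = restrict_space borel {0..}"

fun kpow :: "(real \<Rightarrow> real measure) \<Rightarrow> nat \<Rightarrow> real \<Rightarrow> real measure" where
  "kpow \<Gamma> 0 x = return Rplus x"
| "kpow \<Gamma> (Suc n) x = bind (kpow \<Gamma> n x) \<Gamma>"

definition Gamma_op :: "(real \<Rightarrow> real measure) \<Rightarrow> (real \<Rightarrow> real \<Rightarrow> real) \<Rightarrow> real \<Rightarrow> real \<Rightarrow> real" where
  "Gamma_op \<Gamma> u \<phi> p = (\<integral>\<phi>'. u \<phi>' p \<partial>(\<Gamma> \<phi>))"

definition kappa_enn :: "(real \<Rightarrow> real measure) \<Rightarrow> (real \<Rightarrow> real \<Rightarrow> real) \<Rightarrow> real \<Rightarrow> real \<Rightarrow> real \<Rightarrow> real \<Rightarrow> ennreal" where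
  "kappa_enn \<Gamma> \<pi> b \<delta> \<phi> p =
     (\<Sum>t. ennreal (\<delta> ^ t) * (\<integral>\<^sup>+ \<phi>'. ennreal (\<pi> \<phi>' p + b) \<partial>(kpow \<Gamma> t \<phi>)))"

definition kappa :: "(real \<Rightarrow> real measure) \<Rightarrow> (real \<Rightarrow> real \<Rightarrow> real) \<Rightarrow> real \<Rightarrow> real \<Rightarrow> real \<Rightarrow> real \<Rightarrow> real" where
  "kappa \<Gamma> \<pi> b \<delta> \<phi> p = enn2real (kappa_enn \<Gamma> \<pi> b \<delta> \<phi> p)"

definition incr2 :: "(real \<Rightarrow> real \<Rightarrow> real) \<Rightarrow> bool" where
  "incr2 f \<longleftrightarrow> (\<forall>\<phi>1 \<phi>2 p1 p2. 0 \<le> \<phi>1 \<longrightarrow> 0 \<le> p1 \<longrightarrow> \<phi>1 \<le> \<phi>2 \<longrightarrow> p1 \<le> p2 \<longrightarrow> f \<phi>1 p1 \<le> f \<phi>2 p2)"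

definition strict_incr2 :: "(real \<Rightarrow> real \<Rightarrow> real) \<Rightarrow> bool" where
  "strict_incr2 f \<longleftrightarrow> (\<forall>\<phi>1 \<phi>2 p1 p2. 0 \<le> \<phi>1 \<longrightarrow> 0 \<le> p1 \<longrightarrow> \<phi>1 \<le> \<phi>2 \<longrightarrow> p1 \<le> p2
       \<longrightarrow> (\<phi>1, p1) \<noteq> (\<phi>2, p2) \<longrightarrow> f \<phi>1 p1 < f \<phi>2 p2)"

definition Cspace :: "(real \<Rightarrow> real \<Rightarrow> real) \<Rightarrow> (real \<Rightarrow> real \<Rightarrow> real) set" where
  "Cspace \<kappa> = {f. continuous_on ({0..} \<times> {0..}) (\<lambda>(\<phi>, p). f \<phi> p) \<and> incr2 f \<and>
       bdd_above ((\<lambda>(\<phi>, p). \<bar>f \<phi> p / \<kappa> \<phi> p\<bar>) ` ({0..} \<times> {0..}))}"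

end

theory Submission imports Defs begin

lemma space_Rplus: "space Rplus = {0..}"
  by (simp add: Rplus_def space_restrict_space)

lemma kpow_0: "kpow \<Gamma> 0 = return Rplus"
  by (rule ext) simp

lemma kpow_Suc_fun: "kpow \<Gamma> (Suc n) = (\<lambda>x. bind (kpow \<Gamma> n x) \<Gamma>)"
  by (rule ext) simp

lemma kpow_meas:
  assumes K: "\<Gamma> \<in> Rplus \<rightarrow>\<^sub>M prob_algebra Rplus"
  shows "kpow \<Gamma> n \<in> Rplus \<rightarrow>\<^sub>M prob_algebra Rplus"
proof (induction n)
  case 0 then show ?case by (simp add: kpow_0)
next
  case (Suc n) then show ?case
    unfolding kpow_Suc_fun by (rule measurable_bind_prob_space[OF _ K])
qed

lemma kernel_sets:
  assumes K: "\<Gamma> \<in> Rplus \<rightarrow>\<^sub>M prob_algebra Rplus" and x: "x \<in> space Rplus"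
  shows "sets (\<Gamma> x) = sets Rplus" "prob_space (\<Gamma> x)" "space (\<Gamma> x) = {0..}"
proof -
  have "\<Gamma> x \<in> space (prob_algebra Rplus)" using measurable_space[OF K x] .
  then show s: "sets (\<Gamma> x) = sets Rplus" "prob_space (\<Gamma> x)" by (auto simp: space_prob_algebra)
  show "space (\<Gamma> x) = {0..}" using sets_eq_imp_space_eq[OF s(1)] space_Rplus by simp
qed

lemma kpow_Suc':
  assumes K: "\<Gamma> \<in> Rplus \<rightarrow>\<^sub>M prob_algebra Rplus" and x: "x \<in> space Rplus"
  shows "kpow \<Gamma> (Suc n) x = bind (\<Gamma> x) (kpow \<Gamma> n)"
proof (induction n)
  case 0
  have "bind (return Rplus x) \<Gamma> = \<Gamma> x"
    by (rule bind_return[OF measurable_prob_algebraD[OF K] x])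
  moreover have "bind (\<Gamma> x) (return Rplus) = \<Gamma> x"
    by (rule bind_return''[OF kernel_sets(1)[OF K x]])
  ultimately show ?case by (simp add: kpow_0)
next
  case (Suc n)
  have f: "kpow \<Gamma> n \<in> \<Gamma> x \<rightarrow>\<^sub>M subprob_algebra Rplus"
    using measurable_prob_algebraD[OF kpow_meas[OF K]]
    by (subst measurable_cong_sets[OF kernel_sets(1)[OF K x] refl]) 
  have "kpow \<Gamma> (Suc (Suc n)) x = bind (bind (\<Gamma> x) (kpow \<Gamma> n)) \<Gamma>"
    using Suc by simp
  also have "\<dots> = bind (\<Gamma> x) (\<lambda>y. bind (kpow \<Gamma> n y) \<Gamma>)"
    by (rule bind_assoc[OF f measurable_prob_algebraD[OF K]])
  also have "\<dots> = bind (\<Gamma> x) (kpow \<Gamma> (Suc n))"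
    by (simp add: kpow_Suc_fun)
  finally show ?case .
qed

lemma kappa_meas:
  assumes K: "\<Gamma> \<in> Rplus \<rightarrow>\<^sub>M prob_algebra Rplus" and f: "f \<in> borel_measurable Rplus"
  shows "(\<lambda>y. \<Sum>t. ennreal (\<delta>^t) * (\<integral>\<^sup>+z. f z \<partial>kpow \<Gamma> t y)) \<in> borel_measurable Rplus"
proof -
  have "(\<lambda>y. (\<integral>\<^sup>+z. f z \<partial>kpow \<Gamma> t y)) \<in> borel_measurable Rplus" for t
    using measurable_compose[OF measurable_prob_algebraD[OF kpow_meas[OF K]] nn_integral_measurable_subprob_algebra[OF f]] .
  then show ?thesis by measurable
qed

lemma kappa_step:
  assumes K: "\<Gamma> \<in> Rplus \<rightarrow>\<^sub>M prob_algebra Rplus" and f: "f \<in> borel_measurable Rplus"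
    and x: "x \<in> space Rplus" and d: "0 < \<delta>"
  shows "ennreal \<delta> * (\<integral>\<^sup>+y. (\<Sum>t. ennreal (\<delta>^t) * (\<integral>\<^sup>+z. f z \<partial>kpow \<Gamma> t y)) \<partial>\<Gamma> x)
     \<le> (\<Sum>t. ennreal (\<delta>^t) * (\<integral>\<^sup>+z. f z \<partial>kpow \<Gamma> t x))"
proof -
  have sx: "sets (\<Gamma> x) = sets Rplus" using kernel_sets[OF K x] by simp
  have mI: "(\<lambda>y. (\<integral>\<^sup>+z. f z \<partial>kpow \<Gamma> t y)) \<in> borel_measurable Rplus" for t
    using measurable_compose[OF measurable_prob_algebraD[OF kpow_meas[OF K]] nn_integral_measurable_subprob_algebra[OF f]] .
  have mI': "(\<lambda>y. ennreal (\<delta>^t) * (\<integral>\<^sup>+z. f z \<partial>kpow \<Gamma> t y)) \<in> borel_measurable (\<Gamma> x)" for t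
    using mI[of t] by (simp add: measurable_cong_sets[OF sx refl])
  have step: "(\<integral>\<^sup>+y. (\<integral>\<^sup>+z. f z \<partial>kpow \<Gamma> t y) \<partial>\<Gamma> x) = (\<integral>\<^sup>+z. f z \<partial>kpow \<Gamma> (Suc t) x)" for t
  proof -
    have N: "kpow \<Gamma> t \<in> \<Gamma> x \<rightarrow>\<^sub>M subprob_algebra Rplus"
      using measurable_prob_algebraD[OF kpow_meas[OF K]]
      by (subst measurable_cong_sets[OF sx refl])
    show ?thesis unfolding kpow_Suc'[OF K x] using nn_integral_bind[OF f N] by simp
  qed
  define g where "g t = ennreal (\<delta>^t) * (\<integral>\<^sup>+z. f z \<partial>kpow \<Gamma> t x)" for t
  have "(\<integral>\<^sup>+y. (\<Sum>t. ennreal (\<delta>^t) * (\<integral>\<^sup>+z. f z \<partial>kpow \<Gamma> t y)) \<partial>\<Gamma> x)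
      = (\<Sum>t. \<integral>\<^sup>+y. ennreal (\<delta>^t) * (\<integral>\<^sup>+z. f z \<partial>kpow \<Gamma> t y) \<partial>\<Gamma> x)"
    by (rule nn_integral_suminf[OF mI'])
  also have "\<dots> = (\<Sum>t. ennreal (\<delta>^t) * (\<integral>\<^sup>+z. f z \<partial>kpow \<Gamma> (Suc t) x))"
    using mI by (simp add: nn_integral_cmult measurable_cong_sets[OF sx refl] step)
  finally have eq1: "(\<integral>\<^sup>+y. (\<Sum>t. ennreal (\<delta>^t) * (\<integral>\<^sup>+z. f z \<partial>kpow \<Gamma> t y)) \<partial>\<Gamma> x) = (\<Sum>t. ennreal (\<delta>^t) * (\<integral>\<^sup>+z. f z \<partial>kpow \<Gamma> (Suc t) x))" .
  have e: "ennreal \<delta> * (\<integral>\<^sup>+y. (\<Sum>t. ennreal (\<delta>^t) * (\<integral>\<^sup>+z. f z \<partial>kpow \<Gamma> t y)) \<partial>\<Gamma> x)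
     = (\<Sum>t. g (Suc t))"
  proof -
    have "ennreal \<delta> * (\<Sum>t. ennreal (\<delta>^t) * (\<integral>\<^sup>+z. f z \<partial>kpow \<Gamma> (Suc t) x))
        = (\<Sum>t. ennreal \<delta> * (ennreal (\<delta>^t) * (\<integral>\<^sup>+z. f z \<partial>kpow \<Gamma> (Suc t) x)))"
      by (rule ennreal_suminf_cmult[symmetric])
    also have "\<dots> = (\<Sum>t. g (Suc t))"
      unfolding g_def using d
      by (intro suminf_cong) (simp add: ennreal_mult'[symmetric] mult.assoc[symmetric])
    finally show ?thesis unfolding eq1 .
  qed
  have "g sums ((\<Sum>t. g (Suc t)) + g 0)"
    by (rule sums_Suc) (rule summable_sums[OF summableI])
  then have "(\<Sum>t. g t) = (\<Sum>t. g (Suc t)) + g 0" by (rule sums_unique[symmetric])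
  then show ?thesis unfolding e by (simp add: g_def[symmetric])
qed


lemma upset_shape:
  fixes h :: "real \<Rightarrow> real"
  assumes hc: "continuous_on {0..} h" and hm: "\<And>x y. 0 \<le> x \<Longrightarrow> x \<le> y \<Longrightarrow> h x \<le> h y"
  shows "{x\<in>{0..}. t < h x} = {} \<or> {x\<in>{0..}. t < h x} = {0..} \<or> (\<exists>a\<ge>0. {x\<in>{0..}. t < h x} = {a<..})"
proof -
  let ?S = "{x\<in>{0..}. t < h x}"
  consider "?S = {}" | "0 \<in> ?S" | "?S \<noteq> {}" "0 \<notin> ?S" by blast
  then show ?thesis
  proof cases
    case 2
    then have "?S = {0..}" using hm by (auto intro: less_le_trans)
    then show ?thesis by blast
  next
    case 3
    define a where "a = Inf ?S"
    have bdd: "bdd_below ?S" by (rule bdd_belowI[of _ 0]) auto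
    have a0: "0 \<le> a" unfolding a_def using 3 by (intro cInf_greatest) auto
    have anS: "a \<notin> ?S"
    proof
      assume aS: "a \<in> ?S"
      then have "a \<noteq> 0" using 3 by auto
      with a0 have apos: "0 < a" by simp
      from aS have "0 < h a - t" by simp
      with hc aS obtain d where d: "d > 0" "\<forall>x'\<in>{0..}. dist x' a < d \<longrightarrow> dist (h x') (h a) < h a - t"
        unfolding continuous_on_iff by blast
      define y where "y = a - min a d / 2"
      have y: "0 \<le> y" "y < a" "dist y a < d" using apos d by (auto simp: y_def dist_real_def)
      then have "dist (h y) (h a) < h a - t" using d by auto
      then have "y \<in> ?S" using y by (auto simp: dist_real_def)
      then have "a \<le> y" unfolding a_def using bdd by (rule cInf_lower)
      with y show False by simp
    qed
    have up: "x \<in> ?S" if "a < x" for x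
    proof -
      from that obtain s where s: "s \<in> ?S" "s < x" unfolding a_def using 3 bdd by (auto simp: cInf_less_iff)
      then show ?thesis using hm[of s x] by auto
    qed
    have lo: "a \<le> x" if "x \<in> ?S" for x unfolding a_def using that bdd by (rule cInf_lower)
    have "?S = {a<..}"
    proof (rule set_eqI, rule iffI)
      fix x assume xS: "x \<in> ?S"
      have "x \<noteq> a" using xS anS by metis
      with lo[OF xS] show "x \<in> {a<..}" by simp
    next
      fix x assume "x \<in> {a<..}" then show "x \<in> ?S" using up by simp
    qed
    then show ?thesis using a0 by blast
  qed simp
qed

lemma upset_measure:
  fixes h :: "real \<Rightarrow> real"
  assumes hc: "continuous_on {0..} h" and hm: "\<And>x y. 0 \<le> x \<Longrightarrow> x \<le> y \<Longrightarrow> h x \<le> h y"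
    and P1: "prob_space M1" "sets M1 = sets Rplus" and P2: "prob_space M2" "sets M2 = sets Rplus"
    and dom: "\<And>a. 0 \<le> a \<Longrightarrow> measure M2 {0..a} \<le> measure M1 {0..a}"
  shows "emeasure M1 {x\<in>{0..}. t < h x} \<le> emeasure M2 {x\<in>{0..}. t < h x}"
proof -
  have sp1: "space M1 = {0..}" using sets_eq_imp_space_eq[OF P1(2)] space_Rplus by simp
  have sp2: "space M2 = {0..}" using sets_eq_imp_space_eq[OF P2(2)] space_Rplus by simp
  interpret A: prob_space M1 by (rule P1)
  interpret B: prob_space M2 by (rule P2)
  have setsR: "sets Rplus = sets (restrict_space borel {0::real..})" by (simp add: Rplus_def)
  have i: "{0..a} \<in> sets Rplus" for a :: real
    unfolding setsR by (auto simp: sets_restrict_space_iff)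
  consider "{x\<in>{0..}. t < h x} = {}" | "{x\<in>{0..}. t < h x} = {0..}" | a where "0 \<le> a" "{x\<in>{0..}. t < h x} = {a<..}"
    using upset_shape[OF hc hm] by blast
  then show ?thesis
  proof cases
    case 1 then show ?thesis by (simp only: 1) simp
  next
    case 2 then show ?thesis using A.emeasure_space_1 B.emeasure_space_1 sp1 sp2 by simp
  next
    case 3
    have c: "{a<..} = {0..} - {0..a}" using 3(1) by auto
    have "measure M1 {a<..} = 1 - measure M1 {0..a}"
      unfolding c using A.prob_compl[of "{0..a}"] i[of a] P1(2) sp1 by simp
    moreover have "measure M2 {a<..} = 1 - measure M2 {0..a}"
      unfolding c using B.prob_compl[of "{0..a}"] i[of a] P2(2) sp2 by simp
    ultimately have "measure M1 {a<..} \<le> measure M2 {a<..}" using dom[OF 3(1)] by simp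
    then show ?thesis unfolding 3(2) by (simp add: A.emeasure_eq_measure B.emeasure_eq_measure)
  qed
qed


lemma layer:
  fixes h :: "real \<Rightarrow> real"
  assumes P: "prob_space M" "sets M = sets Rplus"
    and hc: "continuous_on {0..} h" and h0: "\<And>x. 0 \<le> x \<Longrightarrow> 0 \<le> h x"
  shows "(\<integral>\<^sup>+x. ennreal (h x) \<partial>M) = (\<integral>\<^sup>+t. indicator {0..} t * emeasure M {x\<in>{0..}. t < h x} \<partial>lborel)"
proof -
  interpret prob_space M by (rule P)
  interpret pair_sigma_finite M lborel by unfold_locales
  have sp: "space M = {0..}" using sets_eq_imp_space_eq[OF P(2)] space_Rplus by simp
  have hmR: "h \<in> borel_measurable Rplus" unfolding Rplus_def by (rule borel_measurable_continuous_on_restrict[OF hc])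
  have hm[measurable]: "h \<in> borel_measurable M" using hmR by (simp add: measurable_cong_sets[OF P(2) refl])
  define F where "F x t = (if 0 \<le> t \<and> t < h x then 1 else 0 :: ennreal)" for x t
  have Fm: "case_prod F \<in> borel_measurable (M \<Otimes>\<^sub>M lborel)"
    unfolding F_def by measurable
  have "(\<integral>\<^sup>+x. ennreal (h x) \<partial>M) = (\<integral>\<^sup>+x. (\<integral>\<^sup>+t. F x t \<partial>lborel) \<partial>M)"
  proof (rule nn_integral_cong)
    fix x assume "x \<in> space M"
    then have "0 \<le> h x" using h0 sp by auto
    have "(\<integral>\<^sup>+t. F x t \<partial>lborel) = (\<integral>\<^sup>+t. indicator {0..<h x} t \<partial>lborel)"
      by (rule nn_integral_cong) (auto simp: F_def indicator_def)
    also have "\<dots> = ennreal (h x)" using \<open>0 \<le> h x\<close> by simp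
    finally show "ennreal (h x) = (\<integral>\<^sup>+t. F x t \<partial>lborel)" by simp
  qed
  also have "\<dots> = (\<integral>\<^sup>+t. (\<integral>\<^sup>+x. F x t \<partial>M) \<partial>lborel)"
    by (rule Fubini'[OF Fm, symmetric])
  also have "\<dots> = (\<integral>\<^sup>+t. indicator {0..} t * emeasure M {x\<in>{0..}. t < h x} \<partial>lborel)"
  proof (rule nn_integral_cong)
    fix t :: real
    have "(\<integral>\<^sup>+x. F x t \<partial>M) = (\<integral>\<^sup>+x. indicator {0..} t * indicator {x\<in>space M. t < h x} x \<partial>M)"
      by (rule nn_integral_cong) (auto simp: F_def indicator_def)
    also have "\<dots> = indicator {0..} t * emeasure M {x\<in>space M. t < h x}"
      by (subst nn_integral_cmult) auto
    finally show "(\<integral>\<^sup>+x. F x t \<partial>M) = indicator {0..} t * emeasure M {x\<in>{0..}. t < h x}"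
      by (simp add: sp)
  qed
  finally show ?thesis .
qed

lemma dom_nn:
  fixes h :: "real \<Rightarrow> real"
  assumes hc: "continuous_on {0..} h" and hm: "\<And>x y. 0 \<le> x \<Longrightarrow> x \<le> y \<Longrightarrow> h x \<le> h y"
    and h0: "\<And>x. 0 \<le> x \<Longrightarrow> 0 \<le> h x"
    and P1: "prob_space M1" "sets M1 = sets Rplus" and P2: "prob_space M2" "sets M2 = sets Rplus"
    and dom: "\<And>a. 0 \<le> a \<Longrightarrow> measure M2 {0..a} \<le> measure M1 {0..a}"
  shows "(\<integral>\<^sup>+x. ennreal (h x) \<partial>M1) \<le> (\<integral>\<^sup>+x. ennreal (h x) \<partial>M2)"
proof -
  have "(\<integral>\<^sup>+t. indicator {0..} t * emeasure M1 {x\<in>{0..}. t < h x} \<partial>lborel)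
     \<le> (\<integral>\<^sup>+t. indicator {0..} t * emeasure M2 {x\<in>{0..}. t < h x} \<partial>lborel)"
    by (intro nn_integral_mono mult_left_mono upset_measure[OF hc hm P1 P2 dom]) auto
  then show ?thesis using layer[OF P1 hc h0] layer[OF P2 hc h0] by simp
qed

lemma dom_int:
  fixes g :: "real \<Rightarrow> real"
  assumes gc: "continuous_on {0..} g" and gm: "\<And>x y. 0 \<le> x \<Longrightarrow> x \<le> y \<Longrightarrow> g x \<le> g y"
    and P1: "prob_space M1" "sets M1 = sets Rplus" and P2: "prob_space M2" "sets M2 = sets Rplus"
    and dom: "\<And>a. 0 \<le> a \<Longrightarrow> measure M2 {0..a} \<le> measure M1 {0..a}"
    and I1: "integrable M1 g" and I2: "integrable M2 g"
  shows "(\<integral>x. g x \<partial>M1) \<le> (\<integral>x. g x \<partial>M2)"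
proof -
  interpret A: prob_space M1 by (rule P1)
  interpret B: prob_space M2 by (rule P2)
  have sp1: "space M1 = {0..}" using sets_eq_imp_space_eq[OF P1(2)] space_Rplus by simp
  have sp2: "space M2 = {0..}" using sets_eq_imp_space_eq[OF P2(2)] space_Rplus by simp
  define h where "h x = g x - g 0" for x
  have hc: "continuous_on {0..} h" unfolding h_def by (intro continuous_intros gc)
  have hm: "\<And>x y. 0 \<le> x \<Longrightarrow> x \<le> y \<Longrightarrow> h x \<le> h y" unfolding h_def using gm by simp
  have h0: "\<And>x. 0 \<le> x \<Longrightarrow> 0 \<le> h x" unfolding h_def using gm by simp
  have J1: "integrable M1 h" unfolding h_def using I1 by simp
  have J2: "integrable M2 h" unfolding h_def using I2 by simp
  have n1: "(\<integral>\<^sup>+x. ennreal (h x) \<partial>M1) = ennreal (\<integral>x. h x \<partial>M1)"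
    by (rule nn_integral_eq_integral[OF J1]) (auto simp: sp1 h0)
  have n2: "(\<integral>\<^sup>+x. ennreal (h x) \<partial>M2) = ennreal (\<integral>x. h x \<partial>M2)"
    by (rule nn_integral_eq_integral[OF J2]) (auto simp: sp2 h0)
  have "ennreal (\<integral>x. h x \<partial>M1) \<le> ennreal (\<integral>x. h x \<partial>M2)"
    using dom_nn[OF hc hm h0 P1 P2 dom] n1 n2 by simp
  moreover have "0 \<le> (\<integral>x. h x \<partial>M2)" by (rule integral_nonneg_AE) (auto simp: sp2 h0)
  ultimately have le: "(\<integral>x. h x \<partial>M1) \<le> (\<integral>x. h x \<partial>M2)" by (simp add: ennreal_le_iff)
  have "(\<integral>x. h x \<partial>M1) = (\<integral>x. g x \<partial>M1) - g 0" unfolding h_def using I1 by (simp add: A.prob_space)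
  moreover have "(\<integral>x. h x \<partial>M2) = (\<integral>x. g x \<partial>M2) - g 0" unfolding h_def using I2 by (simp add: B.prob_space)
  ultimately show ?thesis using le by simp
qed

theorem lemma4:
  fixes D :: "real \<Rightarrow> ereal"
    and \<pi> q :: "real \<Rightarrow> real \<Rightarrow> real"
    and \<Gamma> :: "real \<Rightarrow> real measure"
    and \<gamma> :: "real measure"
    and r c\<^sub>e \<delta> b :: real
  assumes
    \<comment> \<open>(A1)\<close>
    A1_cont: "continuous_on {0..} D"
    and A1_decr: "\<forall>x y. 0 \<le> x \<longrightarrow> x < y \<longrightarrow> D y < D x"
    and A1_zero: "D 0 = \<infinity>"
    and A1_lim: "(D \<longlongrightarrow> 0) at_top"
    \<comment> \<open>(A2)\<close>
    and A2_cont_pi: "continuous_on ({0..} \<times> {0..}) (\<lambda>(\<phi>, p). \<pi> \<phi> p)"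
    and A2_cont_q: "continuous_on ({0..} \<times> {0..}) (\<lambda>(\<phi>, p). q \<phi> p)"
    and A2_incr_pi: "strict_incr2 \<pi>"
    and A2_incr_q: "strict_incr2 q"
    and A2_q_nonneg: "\<forall>\<phi> p. 0 \<le> \<phi> \<longrightarrow> 0 \<le> p \<longrightarrow> 0 \<le> q \<phi> p"
    and A2_neg: "\<forall>\<phi> p. 0 \<le> \<phi> \<longrightarrow> 0 \<le> p \<longrightarrow> (\<phi> = 0 \<or> p = 0) \<longrightarrow> \<pi> \<phi> p < 0"
    \<comment> \<open>(A3): Markov kernel on R_+, monotone, with conditions (a), (b)\<close>
    and A3_kernel: "\<Gamma> \<in> Rplus \<rightarrow>\<^sub>M prob_algebra Rplus"
    and A3_mono: "\<forall>a \<phi>1 \<phi>2. 0 \<le> a \<longrightarrow> 0 \<le> \<phi>1 \<longrightarrow> \<phi>1 \<le> \<phi>2 \<longrightarrow>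
                    measure (\<Gamma> \<phi>2) {0..a} \<le> measure (\<Gamma> \<phi>1) {0..a}"
    and A3a: "\<forall>a \<phi>. 0 < a \<longrightarrow> 0 \<le> \<phi> \<longrightarrow> (\<exists>n. 0 < measure (kpow \<Gamma> n \<phi>) {0..<a})"
    and A3b: "\<forall>p. 0 < p \<longrightarrow> (\<exists>\<phi>\<ge>0. 0 \<le> (\<integral>\<phi>'. \<pi> \<phi>' p \<partial>(\<Gamma> \<phi>)))"
    and r_pos: "0 < r"
    \<comment> \<open>(A4)\<close>
    and A4_prob: "prob_space \<gamma>"
    and A4_sets: "sets \<gamma> = sets Rplus"
    and A4_q: "\<forall>p. 0 \<le> p \<longrightarrow> integrable \<gamma> (\<lambda>\<phi>. q \<phi> p)"
    and A4_supp: "\<forall>a. 0 < a \<longrightarrow> 0 < measure \<gamma> {0..a}"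
    and ce_pos: "0 < c\<^sub>e"
    \<comment> \<open>(A5)\<close>
    and A5: "\<exists>p>0. c\<^sub>e \<le> (\<integral>\<phi>. \<pi> \<phi> p \<partial>\<gamma>)"
    \<comment> \<open>(A6), with beta = 1/(1+r)\<close>
    and A6: "\<forall>p. 0 \<le> p \<longrightarrow> (\<Sum>t. (1 / (1 + r)) ^ t * (\<integral>\<phi>'. \<pi> \<phi>' p \<partial>(kpow \<Gamma> t 0))) \<le> 0"
    \<comment> \<open>(A7): delta in (beta,1), E pi(phi_t,p) finite and the discounted series finite\<close>
    and A7_delta: "1 / (1 + r) < \<delta>" "\<delta> < 1"
    and A7_int: "\<forall>t p. 0 \<le> p \<longrightarrow> integrable (bind \<gamma> (kpow \<Gamma> t)) (\<lambda>\<phi>. \<pi> \<phi> p)"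
    and A7_sum: "\<forall>p. 0 \<le> p \<longrightarrow> summable (\<lambda>t. \<delta> ^ t * (\<integral>\<phi>. \<pi> \<phi> p \<partial>(bind \<gamma> (kpow \<Gamma> t))))"
    \<comment> \<open>the constant b and finiteness of kappa\<close>
    and b_bound: "\<forall>\<phi> p. 0 \<le> \<phi> \<longrightarrow> 0 \<le> p \<longrightarrow> 1 \<le> \<pi> \<phi> p + b"
    and kappa_fin: "\<forall>\<phi> p. 0 \<le> \<phi> \<longrightarrow> 0 \<le> p \<longrightarrow> kappa_enn \<Gamma> \<pi> b \<delta> \<phi> p < \<infinity>"
    \<comment> \<open>(A8)\<close>
    and A8: "\<forall>u \<in> Cspace (kappa \<Gamma> \<pi> b \<delta>).
               continuous_on ({0..} \<times> {0..}) (\<lambda>(\<phi>, p). \<integral>\<phi>'. u \<phi>' p \<partial>(\<Gamma> \<phi>))"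
  shows
    "(\<forall>u \<in> Cspace (kappa \<Gamma> \<pi> b \<delta>).
        (\<forall>\<phi> p. 0 \<le> \<phi> \<longrightarrow> 0 \<le> p \<longrightarrow> integrable (\<Gamma> \<phi>) (\<lambda>\<phi>'. u \<phi>' p)) \<and>
        Gamma_op \<Gamma> u \<in> Cspace (kappa \<Gamma> \<pi> b \<delta>))
     \<and> (\<forall>\<phi> p. 0 \<le> \<phi> \<longrightarrow> 0 \<le> p \<longrightarrow>
        integrable (\<Gamma> \<phi>) (\<lambda>\<phi>'. kappa \<Gamma> \<pi> b \<delta> \<phi>' p) \<and>
        Gamma_op \<Gamma> (kappa \<Gamma> \<pi> b \<delta>) \<phi> p \<le> kappa \<Gamma> \<pi> b \<delta> \<phi> p / \<delta>)"
proof -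
  note K = A3_kernel
  have d0: "0 < \<delta>" using A7_delta(1) r_pos
    by (smt (verit) divide_pos_pos)
  define kenn where "kenn = kappa_enn \<Gamma> \<pi> b \<delta>"
  define k where "k = kappa \<Gamma> \<pi> b \<delta>"
  have sl: "continuous_on {0..} (\<lambda>x. f x p)"
    if A: "continuous_on ({0..} \<times> {0..}) (\<lambda>(x, p). f x p)" and p: "0 \<le> p" for f :: "real \<Rightarrow> real \<Rightarrow> real" and p
  proof -
    have "continuous_on {0..} ((\<lambda>(x, p). f x p) \<circ> (\<lambda>x. (x, p)))"
      by (rule continuous_on_compose) (auto intro!: continuous_intros continuous_on_subset[OF A] simp: p)
    then show ?thesis by (simp add: o_def)
  qed
  have fpm: "(\<lambda>z. ennreal (\<pi> z p + b)) \<in> borel_measurable Rplus" if p: "0 \<le> p" for p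
  proof -
    have "(\<lambda>z. \<pi> z p) \<in> borel_measurable Rplus"
      unfolding Rplus_def by (rule borel_measurable_continuous_on_restrict[OF sl[OF A2_cont_pi p]])
    then show ?thesis by measurable
  qed
  have kenn_eq: "kenn x p = (\<Sum>t. ennreal (\<delta>^t) * (\<integral>\<^sup>+z. ennreal (\<pi> z p + b) \<partial>kpow \<Gamma> t x))" for x p
    by (simp add: kenn_def kappa_enn_def)
  have kmeas: "(\<lambda>y. kenn y p) \<in> borel_measurable Rplus" if "0 \<le> p" for p
    unfolding kenn_eq by (rule kappa_meas[OF K fpm[OF that]])
  have kstep: "ennreal \<delta> * (\<integral>\<^sup>+y. kenn y p \<partial>\<Gamma> x) \<le> kenn x p" if "0 \<le> x" "0 \<le> p" for x p
    unfolding kenn_eq by (rule kappa_step[OF K fpm[OF that(2)] _ d0]) (simp add: space_Rplus that)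
  have kfin: "kenn x p < top" if "0 \<le> x" "0 \<le> p" for x p
    using kappa_fin that by (simp add: kenn_def)
  have kenn_k: "ennreal (k x p) = kenn x p" if "0 \<le> x" "0 \<le> p" for x p
    using kfin[OF that] by (simp add: k_def kappa_def kenn_def[symmetric])
  have k_ge1: "1 \<le> k x p" if "0 \<le> x" "0 \<le> p" for x p
  proof -
    have xs: "x \<in> space Rplus" using that by (simp add: space_Rplus)
    have "ennreal (\<delta>^0) * (\<integral>\<^sup>+z. ennreal (\<pi> z p + b) \<partial>kpow \<Gamma> 0 x) = ennreal (\<pi> x p + b)"
      using nn_integral_return[OF xs fpm[OF that(2)]] by simp
    moreover have "(\<Sum>t\<in>{0}. ennreal (\<delta>^t) * (\<integral>\<^sup>+z. ennreal (\<pi> z p + b) \<partial>kpow \<Gamma> t x)) \<le> kenn x p"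
      unfolding kenn_eq by (rule sum_le_suminf) (auto intro: summableI)
    ultimately have "ennreal (\<pi> x p + b) \<le> ennreal (k x p)" using kenn_k[OF that] by simp
    moreover have "1 \<le> \<pi> x p + b" using b_bound that by auto
    ultimately show ?thesis by (smt (verit) ennreal_le_iff2 ennreal_less_iff)
  qed
  have kpart: "integrable (\<Gamma> x) (\<lambda>y. k y p) \<and> (\<integral>y. k y p \<partial>\<Gamma> x) \<le> k x p / \<delta>"
    if xp: "0 \<le> x" "0 \<le> p" for x p
  proof -
    have xs: "x \<in> space Rplus" using that by (simp add: space_Rplus)
    note G = kernel_sets[OF K xs]
    have km: "(\<lambda>y. k y p) \<in> borel_measurable (\<Gamma> x)"
    proof -
      have "(\<lambda>y. enn2real (kenn y p)) \<in> borel_measurable Rplus" using kmeas[OF xp(2)] by measurable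
      then show ?thesis by (simp add: measurable_cong_sets[OF G(1) refl] k_def kappa_def kenn_def)
    qed
    have N: "(\<integral>\<^sup>+y. ennreal (k y p) \<partial>\<Gamma> x) = (\<integral>\<^sup>+y. kenn y p \<partial>\<Gamma> x)"
      by (rule nn_integral_cong) (simp add: G(3) kenn_k xp)
    have st: "ennreal \<delta> * (\<integral>\<^sup>+y. ennreal (k y p) \<partial>\<Gamma> x) \<le> kenn x p"
      using kstep[OF xp] N by simp
    have Nfin: "(\<integral>\<^sup>+y. ennreal (k y p) \<partial>\<Gamma> x) < \<infinity>"
    proof -
      have "(\<integral>\<^sup>+y. ennreal (k y p) \<partial>\<Gamma> x) \<noteq> \<infinity>"
      proof
        assume "(\<integral>\<^sup>+y. ennreal (k y p) \<partial>\<Gamma> x) = \<infinity>"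
        then have "ennreal \<delta> * (\<integral>\<^sup>+y. ennreal (k y p) \<partial>\<Gamma> x) = \<infinity>"
          using d0 by (simp add: ennreal_mult_eq_top_iff)
        with st kfin[OF xp] show False by simp
      qed
      then show ?thesis by (simp add: less_top)
    qed
    have k0: "0 \<le> k y p" for y by (simp add: k_def kappa_def)
    have int: "integrable (\<Gamma> x) (\<lambda>y. k y p)"
    proof (rule integrableI_bounded[OF km])
      have "(\<integral>\<^sup>+y. ennreal (norm (k y p)) \<partial>\<Gamma> x) = (\<integral>\<^sup>+y. ennreal (k y p) \<partial>\<Gamma> x)"
        by (simp add: k0)
      with Nfin show "(\<integral>\<^sup>+y. ennreal (norm (k y p)) \<partial>\<Gamma> x) < \<infinity>" by simp
    qed
    have ie: "(\<integral>y. k y p \<partial>\<Gamma> x) = enn2real (\<integral>\<^sup>+y. ennreal (k y p) \<partial>\<Gamma> x)"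
      by (rule integral_eq_nn_integral[OF km]) (simp add: k0)
    have "enn2real (ennreal \<delta> * (\<integral>\<^sup>+y. ennreal (k y p) \<partial>\<Gamma> x)) \<le> enn2real (kenn x p)"
      by (rule enn2real_mono[OF st kfin[OF xp]])
    then have "\<delta> * enn2real (\<integral>\<^sup>+y. ennreal (k y p) \<partial>\<Gamma> x) \<le> enn2real (kenn x p)"
      using d0 by (simp add: enn2real_mult)
    moreover have kx: "k x p = enn2real (kenn x p)" by (simp add: k_def kappa_def kenn_def)
    ultimately have "\<delta> * (\<integral>y. k y p \<partial>\<Gamma> x) \<le> k x p"
      using ie kx by metis
    then have "(\<integral>y. k y p \<partial>\<Gamma> x) \<le> k x p / \<delta>" using d0 by (simp add: pos_le_divide_eq mult.commute)
    with int show ?thesis by simp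
  qed
  have kpos: "0 < k x p" if "0 \<le> x" "0 \<le> p" for x p using k_ge1[OF that] by simp
  have upart: "(\<forall>x p. 0 \<le> x \<longrightarrow> 0 \<le> p \<longrightarrow> integrable (\<Gamma> x) (\<lambda>y. u y p)) \<and> Gamma_op \<Gamma> u \<in> Cspace k"
    if uC: "u \<in> Cspace k" for u
  proof -
    have uc: "continuous_on ({0..} \<times> {0..}) (\<lambda>(x, p). u x p)" and ui: "incr2 u"
      and ub: "bdd_above ((\<lambda>(x, p). \<bar>u x p / k x p\<bar>) ` ({0..} \<times> {0..}))"
      using uC by (auto simp: Cspace_def)
    obtain M where M: "\<And>z. z \<in> ((\<lambda>(x, p). \<bar>u x p / k x p\<bar>) ` ({0..} \<times> {0..})) \<Longrightarrow> z \<le> M"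
      using ub unfolding bdd_above_def by blast
    have uM: "\<bar>u x p\<bar> \<le> \<bar>M\<bar> * k x p" if "0 \<le> x" "0 \<le> p" for x p
    proof -
      have "(x, p) \<in> {0..} \<times> {0..}" using that by simp
      from M[OF imageI[OF this]] have "\<bar>u x p / k x p\<bar> \<le> M" by simp
      moreover have "\<bar>u x p / k x p\<bar> = \<bar>u x p\<bar> / k x p" using kpos[OF that] by simp
      ultimately have "\<bar>u x p\<bar> / k x p \<le> \<bar>M\<bar>" by linarith
      then show ?thesis using kpos[OF that] by (simp add: pos_divide_le_eq mult.commute)
    qed
    have umeas: "(\<lambda>y. u y p) \<in> borel_measurable (\<Gamma> x)" if "0 \<le> x" "0 \<le> p" for x p
    proof -
      have xs: "x \<in> space Rplus" using that by (simp add: space_Rplus)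
      have "(\<lambda>y. u y p) \<in> borel_measurable Rplus"
        unfolding Rplus_def by (rule borel_measurable_continuous_on_restrict[OF sl[OF uc that(2)]])
      then show ?thesis by (simp add: measurable_cong_sets[OF kernel_sets(1)[OF K xs] refl])
    qed
    have uint: "integrable (\<Gamma> x) (\<lambda>y. u y p)" if "0 \<le> x" "0 \<le> p" for x p
    proof -
      have xs: "x \<in> space Rplus" using that by (simp add: space_Rplus)
      note G = kernel_sets[OF K xs]
      have "integrable (\<Gamma> x) (\<lambda>y. \<bar>M\<bar> * k y p)" using kpart[OF that] by simp
      then show ?thesis
      proof (rule Bochner_Integration.integrable_bound)
        show "(\<lambda>y. u y p) \<in> borel_measurable (\<Gamma> x)" by (rule umeas[OF that])
        show "AE y in \<Gamma> x. norm (u y p) \<le> norm (\<bar>M\<bar> * k y p)"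
        proof (rule AE_I2)
          fix y assume "y \<in> space (\<Gamma> x)"
          then have y0: "0 \<le> y" by (simp add: G(3))
          show "norm (u y p) \<le> norm (\<bar>M\<bar> * k y p)"
            using uM[OF y0 that(2)] kpos[OF y0 that(2)] by (simp add: abs_mult)
        qed
      qed
    qed
    have cont: "continuous_on ({0..} \<times> {0..}) (\<lambda>(x, p). Gamma_op \<Gamma> u x p)"
      using A8 uC by (simp add: Gamma_op_def k_def)
    have inc: "incr2 (Gamma_op \<Gamma> u)"
      unfolding incr2_def
    proof (intro allI impI)
      fix x1 x2 p1 p2 :: real
      assume h: "0 \<le> x1" "0 \<le> p1" "x1 \<le> x2" "p1 \<le> p2"
      have x2: "0 \<le> x2" "0 \<le> p2" using h by auto
      have xs1: "x1 \<in> space Rplus" "x2 \<in> space Rplus" using h x2 by (auto simp: space_Rplus)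
      note G1 = kernel_sets[OF K xs1(1)] and G2 = kernel_sets[OF K xs1(2)]
      have "(\<integral>y. u y p1 \<partial>\<Gamma> x1) \<le> (\<integral>y. u y p2 \<partial>\<Gamma> x1)"
        by (rule integral_mono[OF uint[OF h(1,2)] uint[OF h(1) x2(2)]])
          (use ui h in \<open>auto simp: G1(3) incr2_def\<close>)
      also have "\<dots> \<le> (\<integral>y. u y p2 \<partial>\<Gamma> x2)"
      proof (rule dom_int[OF sl[OF uc x2(2)] _ G1(2) G1(1) G2(2) G2(1)])
        show "\<And>x y. 0 \<le> x \<Longrightarrow> x \<le> y \<Longrightarrow> u x p2 \<le> u y p2" using ui x2 by (auto simp: incr2_def)
        show "\<And>a. 0 \<le> a \<Longrightarrow> measure (\<Gamma> x2) {0..a} \<le> measure (\<Gamma> x1) {0..a}"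
          using A3_mono h by auto
        show "integrable (\<Gamma> x1) (\<lambda>y. u y p2)" by (rule uint[OF h(1) x2(2)])
        show "integrable (\<Gamma> x2) (\<lambda>y. u y p2)" by (rule uint[OF x2])
      qed
      finally show "Gamma_op \<Gamma> u x1 p1 \<le> Gamma_op \<Gamma> u x2 p2" by (simp add: Gamma_op_def)
    qed
    have bd: "\<bar>Gamma_op \<Gamma> u x p / k x p\<bar> \<le> \<bar>M\<bar> / \<delta>" if "0 \<le> x" "0 \<le> p" for x p
    proof -
      have xs: "x \<in> space Rplus" using that by (simp add: space_Rplus)
      note G = kernel_sets[OF K xs]
      have "\<bar>Gamma_op \<Gamma> u x p\<bar> \<le> (\<integral>y. norm (u y p) \<partial>\<Gamma> x)"
        unfolding Gamma_op_def using integral_norm_bound[of "\<Gamma> x" "\<lambda>y. u y p"] by simp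
      also have "\<dots> \<le> (\<integral>y. \<bar>M\<bar> * k y p \<partial>\<Gamma> x)"
        by (rule integral_mono) (use uint[OF that] kpart[OF that] uM that in \<open>auto simp: G(3)\<close>)
      also have "\<dots> = \<bar>M\<bar> * (\<integral>y. k y p \<partial>\<Gamma> x)" by simp
      also have "\<dots> \<le> \<bar>M\<bar> * (k x p / \<delta>)"
        using kpart[OF that] by (intro mult_left_mono) auto
      finally have gb: "\<bar>Gamma_op \<Gamma> u x p\<bar> \<le> \<bar>M\<bar> / \<delta> * k x p" by simp
      have "\<bar>Gamma_op \<Gamma> u x p / k x p\<bar> = \<bar>Gamma_op \<Gamma> u x p\<bar> / k x p" using kpos[OF that] by simp
      also have "\<dots> \<le> \<bar>M\<bar> / \<delta>"
        using gb kpos[OF that] by (subst pos_divide_le_eq) auto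
      finally show ?thesis .
    qed
    have "bdd_above ((\<lambda>(x, p). \<bar>Gamma_op \<Gamma> u x p / k x p\<bar>) ` ({0..} \<times> {0..}))"
      by (rule bdd_aboveI[of _ "\<bar>M\<bar> / \<delta>"]) (auto simp del: abs_divide intro!: bd)
    with cont inc have "Gamma_op \<Gamma> u \<in> Cspace k" by (simp add: Cspace_def)
    with uint show ?thesis by blast
  qed
  show ?thesis
    unfolding k_def[symmetric]
    using upart kpart by (simp add: Gamma_op_def)
qed
end
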